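(* Let $I$ be a countable set with a quasi-distance $d$ such that $\sup_{i\in I}|B_R(i)|<\infty$ for every $R>0$. Let $\mathcal{C}\subset B(\ell^2(I))$ be the set of non-expansive operators. Then: (1) if $A,B\in\mathcal{C}$ and $c\in\mathbb{C}$ then $A+B\in\mathcal{C}$ and $cA\in\mathcal{C}$; (2) if $A,B\in\mathcal{C}$ then $AB\in\mathcal{C}$; (3) if $\mathcal{J}$ is a filter on a set $S$, $A_j\in\mathcal{C}$ for all $j\in S$, and $\lim_{j\to\mathcal{J}}\|A-A_j\|=0$ for some $A\in B(\ell^2(I))$, then $A\in\mathcal{C}$. Consequently $\mathcal{C}$ is a $C^*$-algebra.
   Context: A quasi-distance on $I$ is $d:I\times I\to[0,\infty)$ with $d(i,i)=0$, $d(i,j)=d(j,i)$, $d(i,j)\le d(i,k)+d(k,j)$. $B_R(i)=\{j\in I:d(j,i)\le R\}$. $\{\delta_i\}_{i\in I}$ is the canonical orthonormal basis of $\ell^2(I)$. An operator $A\in B(\ell^2(I))$ is row non-expansive if for every $\varepsilon>0$ there exists $N>0$ with $\sum_{j\in I\setminus B_N(i)}|\langle A\delta_i,\delta_j\rangle|^2<\varepsilon$ for all $i\in I$; $A$ is non-expansive if both $A$ and $A^*$ are row non-expansive. The limit along a filter: $\lim_{j\to\mathcal{J}}\|A-A_j\|=0$ means for every $\varepsilon>0$ the set $\{j:\|A-A_j\|<\varepsilon\}$ belongs to $\mathcal{J}$. *)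

theory Defs
  imports "HOL-Analysis.Analysis"
begin

text \<open>The index set I is the whole (countable) type 'i.  Vectors of l2(I) are
  square-summable functions 'i => complex; operators are functions on such
  vectors, and B(l2(I)) is the set of bounded linear ones.\<close>

definition quasi_distance :: "('i \<Rightarrow> 'i \<Rightarrow> real) \<Rightarrow> bool" where
  "quasi_distance d \<longleftrightarrow>
     (\<forall>i j. d i j \<ge> 0) \<and> (\<forall>i. d i i = 0) \<and> (\<forall>i j. d i j = d j i) \<and>
     (\<forall>i j k. d i j \<le> d i k + d k j)"

definition ball_qd :: "('i \<Rightarrow> 'i \<Rightarrow> real) \<Rightarrow> real \<Rightarrow> 'i \<Rightarrow> 'i set" where
  "ball_qd d R i = {j. d j i \<le> R}"

definition ell2 :: "('i \<Rightarrow> complex) set" where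
  "ell2 = {x. (\<lambda>i. (cmod (x i))\<^sup>2) summable_on UNIV}"

definition ell2_norm :: "('i \<Rightarrow> complex) \<Rightarrow> real" where
  "ell2_norm x = sqrt (\<Sum>\<^sub>\<infinity>i. (cmod (x i))\<^sup>2)"

definition ell2_inner :: "('i \<Rightarrow> complex) \<Rightarrow> ('i \<Rightarrow> complex) \<Rightarrow> complex" where
  "ell2_inner x y = (\<Sum>\<^sub>\<infinity>i. x i * cnj (y i))"

definition delta :: "'i \<Rightarrow> 'i \<Rightarrow> complex" where
  "delta i = (\<lambda>k. if k = i then 1 else 0)"

type_synonym 'i op = "('i \<Rightarrow> complex) \<Rightarrow> ('i \<Rightarrow> complex)"

definition bounded_op :: "'i op \<Rightarrow> bool" where
  "bounded_op A \<longleftrightarrow>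
     (\<forall>x\<in>ell2. A x \<in> ell2) \<and>
     (\<forall>x\<in>ell2. \<forall>y\<in>ell2. A (\<lambda>i. x i + y i) = (\<lambda>i. A x i + A y i)) \<and>
     (\<forall>c. \<forall>x\<in>ell2. A (\<lambda>i. c * x i) = (\<lambda>i. c * A x i)) \<and>
     (\<exists>K. \<forall>x\<in>ell2. ell2_norm (A x) \<le> K * ell2_norm x)"

definition op_norm :: "'i op \<Rightarrow> real" where
  "op_norm A = Sup {ell2_norm (A x) | x. x \<in> ell2 \<and> ell2_norm x \<le> 1}"

definition op_add :: "'i op \<Rightarrow> 'i op \<Rightarrow> 'i op" where
  "op_add A B = (\<lambda>x. (\<lambda>i. A x i + B x i))"
definition op_diff :: "'i op \<Rightarrow> 'i op \<Rightarrow> 'i op" where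
  "op_diff A B = (\<lambda>x. (\<lambda>i. A x i - B x i))"
definition op_scale :: "complex \<Rightarrow> 'i op \<Rightarrow> 'i op" where
  "op_scale c A = (\<lambda>x. (\<lambda>i. c * A x i))"
definition op_mult :: "'i op \<Rightarrow> 'i op \<Rightarrow> 'i op" where
  "op_mult A B = (\<lambda>x. A (B x))"

definition is_adjoint :: "'i op \<Rightarrow> 'i op \<Rightarrow> bool" where
  "is_adjoint A B \<longleftrightarrow> bounded_op A \<and> bounded_op B \<and>
     (\<forall>x\<in>ell2. \<forall>y\<in>ell2. ell2_inner (A x) y = ell2_inner x (B y))"

definition row_nonexpansive_entries ::
    "('i \<Rightarrow> 'i \<Rightarrow> real) \<Rightarrow> ('i \<Rightarrow> 'i \<Rightarrow> complex) \<Rightarrow> bool" where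
  "row_nonexpansive_entries d M \<longleftrightarrow>
     (\<forall>\<epsilon>>0. \<exists>N>0. \<forall>i.
        (\<Sum>\<^sub>\<infinity>j\<in>UNIV - ball_qd d N i. (cmod (M i j))\<^sup>2) < \<epsilon>)"

definition row_nonexpansive :: "('i \<Rightarrow> 'i \<Rightarrow> real) \<Rightarrow> 'i op \<Rightarrow> bool" where
  "row_nonexpansive d A \<longleftrightarrow>
     row_nonexpansive_entries d (\<lambda>i j. ell2_inner (A (delta i)) (delta j))"

text \<open>A is non-expansive iff A and A* are row non-expansive; the matrix entries
  of A* are <A* delta_i, delta_j> = <delta_i, A delta_j>.\<close>
definition nonexpansive :: "('i \<Rightarrow> 'i \<Rightarrow> real) \<Rightarrow> 'i op \<Rightarrow> bool" where
  "nonexpansive d A \<longleftrightarrow> row_nonexpansive d A \<and>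
     row_nonexpansive_entries d (\<lambda>i j. ell2_inner (delta i) (A (delta j)))"

definition nonexp_ops :: "('i \<Rightarrow> 'i \<Rightarrow> real) \<Rightarrow> 'i op set" where
  "nonexp_ops d = {A. bounded_op A \<and> nonexpansive d A}"

end

theory Submission
  imports Defs
begin

definition tsq :: "('i \<Rightarrow> complex) \<Rightarrow> 'i set \<Rightarrow> real" where
  "tsq x S = (\<Sum>\<^sub>\<infinity>i\<in>S. (cmod (x i))\<^sup>2)"

definition nrm :: "('i \<Rightarrow> complex) \<Rightarrow> 'i set \<Rightarrow> real" where
  "nrm x S = sqrt (tsq x S)"

lemma ell2_norm_nrm: "ell2_norm x = nrm x UNIV"
  by (simp add: ell2_norm_def nrm_def tsq_def)

lemma ell2_summ: "x \<in> ell2 \<Longrightarrow> (\<lambda>i. (cmod (x i))\<^sup>2) summable_on S"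
  unfolding ell2_def using summable_on_subset by blast

lemma tsq_nonneg: "0 \<le> tsq x S" by (simp add: tsq_def infsum_nonneg)
lemma nrm_nonneg: "0 \<le> nrm x S" by (simp add: nrm_def tsq_nonneg)

lemma tsq_mono: "x \<in> ell2 \<Longrightarrow> S \<subseteq> T \<Longrightarrow> tsq x S \<le> tsq x T"
  unfolding tsq_def by (rule infsum_mono2) (auto simp: ell2_summ)

lemma nrm_mono: "x \<in> ell2 \<Longrightarrow> S \<subseteq> T \<Longrightarrow> nrm x S \<le> nrm x T"
  unfolding nrm_def by (simp add: tsq_mono)

lemma sum_le_tsq: "x \<in> ell2 \<Longrightarrow> finite F \<Longrightarrow> F \<subseteq> S \<Longrightarrow> (\<Sum>i\<in>F. (cmod (x i))\<^sup>2) \<le> tsq x S"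
proof -
  assume a: "x \<in> ell2" "finite F" "F \<subseteq> S"
  have "(\<Sum>\<^sub>\<infinity>i\<in>F. (cmod (x i))\<^sup>2) \<le> tsq x S"
    unfolding tsq_def by (rule infsum_mono2) (use a in \<open>auto simp: ell2_summ\<close>)
  then show ?thesis using a by simp
qed

lemma L2_le_nrm: "x \<in> ell2 \<Longrightarrow> finite F \<Longrightarrow> F \<subseteq> S \<Longrightarrow> L2_set (\<lambda>i. cmod (x i)) F \<le> nrm x S"
  unfolding L2_set_def nrm_def by (simp add: sum_le_tsq)

lemma pt_le: "x \<in> ell2 \<Longrightarrow> i \<in> S \<Longrightarrow> cmod (x i) \<le> nrm x S"
  using L2_le_nrm[of x "{i}" S] by (simp add: L2_set_def)

lemma tsq_boundI:
  assumes "\<And>F. finite F \<Longrightarrow> F \<subseteq> S \<Longrightarrow> (\<Sum>i\<in>F. (cmod (x i))\<^sup>2) \<le> b"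
  shows "(\<lambda>i. (cmod (x i))\<^sup>2) summable_on S \<and> tsq x S \<le> b"
proof -
  have s: "(\<lambda>i. (cmod (x i))\<^sup>2) summable_on S"
    by (rule nonneg_bdd_above_summable_on) (use assms in \<open>auto intro!: bdd_aboveI\<close>)
  show ?thesis using s unfolding tsq_def by (auto intro: infsum_le_finite_sums assms)
qed

lemma nrm_boundI:
  assumes "0 \<le> b" "\<And>F. finite F \<Longrightarrow> F \<subseteq> S \<Longrightarrow> L2_set (\<lambda>i. cmod (x i)) F \<le> b"
  shows "(\<lambda>i. (cmod (x i))\<^sup>2) summable_on S \<and> nrm x S \<le> b"
proof -
  have "(\<lambda>i. (cmod (x i))\<^sup>2) summable_on S \<and> tsq x S \<le> b\<^sup>2"
  proof (rule tsq_boundI)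
    fix F assume F: "finite F" "F \<subseteq> S"
    have "sqrt (\<Sum>i\<in>F. (cmod (x i))\<^sup>2) \<le> b" using assms(2)[OF F] by (simp add: L2_set_def)
    then show "(\<Sum>i\<in>F. (cmod (x i))\<^sup>2) \<le> b\<^sup>2"
      by (metis (no_types, lifting) assms(1) real_sqrt_le_iff real_sqrt_pow2_iff sum_nonneg zero_le_power2 real_sqrt_abs abs_of_nonneg)
  qed
  then show ?thesis unfolding nrm_def using assms(1) real_le_lsqrt tsq_nonneg by blast
qed

lemma ell2_boundI:
  assumes "\<And>F. finite F \<Longrightarrow> (\<Sum>i\<in>F. (cmod (x i))\<^sup>2) \<le> b"
  shows "x \<in> ell2"
  using tsq_boundI[of UNIV x b] assms unfolding ell2_def by auto

lemma zero_ell2: "(\<lambda>i. 0) \<in> ell2" by (simp add: ell2_def)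
lemma nrm_zero: "nrm (\<lambda>i. 0) S = 0" by (simp add: nrm_def tsq_def)

lemma mink:
  assumes "x \<in> ell2" "y \<in> ell2"
  shows "(\<lambda>i. x i + y i) \<in> ell2 \<and> nrm (\<lambda>i. x i + y i) S \<le> nrm x S + nrm y S"
proof -
  have key: "L2_set (\<lambda>i. cmod (x i + y i)) F \<le> nrm x T + nrm y T" if "finite F" "F \<subseteq> T" for F T
  proof -
    have "L2_set (\<lambda>i. cmod (x i + y i)) F \<le> L2_set (\<lambda>i. cmod (x i) + cmod (y i)) F"
      by (rule L2_set_mono) (auto simp: norm_triangle_ineq)
    also have "\<dots> \<le> L2_set (\<lambda>i. cmod (x i)) F + L2_set (\<lambda>i. cmod (y i)) F"
      by (rule L2_set_triangle_ineq)
    also have "\<dots> \<le> nrm x T + nrm y T" using L2_le_nrm assms that by (metis add_mono)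
    finally show ?thesis .
  qed
  have "(\<lambda>i. (cmod (x i + y i))\<^sup>2) summable_on UNIV"
    using nrm_boundI[of "nrm x UNIV + nrm y UNIV" UNIV "\<lambda>i. x i + y i"] key
    by (simp add: add_nonneg_nonneg nrm_nonneg)
  moreover have "nrm (\<lambda>i. x i + y i) S \<le> nrm x S + nrm y S"
    using nrm_boundI[of "nrm x S + nrm y S" S "\<lambda>i. x i + y i"] key
    by (simp add: add_nonneg_nonneg nrm_nonneg)
  ultimately show ?thesis unfolding ell2_def by simp
qed

lemma tsq_scale: "tsq (\<lambda>i. c * x i) S = (cmod c)\<^sup>2 * tsq x S"
  unfolding tsq_def by (simp add: norm_mult power_mult_distrib infsum_cmult_right')

lemma nrm_scale: "nrm (\<lambda>i. c * x i) S = cmod c * nrm x S"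
  unfolding nrm_def by (simp add: tsq_scale real_sqrt_mult)

lemma scale_ell2: "x \<in> ell2 \<Longrightarrow> (\<lambda>i. c * x i) \<in> ell2"
  unfolding ell2_def by (simp add: norm_mult power_mult_distrib summable_on_cmult_right)

lemma mink_sum:
  assumes "finite K" "\<forall>k\<in>K. v k \<in> ell2"
  shows "(\<lambda>i. \<Sum>k\<in>K. v k i) \<in> ell2 \<and> nrm (\<lambda>i. \<Sum>k\<in>K. v k i) S \<le> (\<Sum>k\<in>K. nrm (v k) S)"
  using assms
proof (induction K rule: finite_induct)
  case empty
  then show ?case by (simp add: zero_ell2 nrm_zero)
next
  case (insert a K)
  have e: "(\<lambda>i. \<Sum>k\<in>insert a K. v k i) = (\<lambda>i. v a i + (\<Sum>k\<in>K. v k i))"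
    using insert by simp
  from insert have IH: "(\<lambda>i. \<Sum>k\<in>K. v k i) \<in> ell2" "nrm (\<lambda>i. \<Sum>k\<in>K. v k i) S \<le> (\<Sum>k\<in>K. nrm (v k) S)" by auto
  have va: "v a \<in> ell2" using insert by auto
  show ?case unfolding e using mink[OF va IH(1), of S] IH(2) insert by auto
qed

lemma delta_ell2: "delta m \<in> ell2"
proof -
  have "(\<lambda>i. (cmod (delta m i))\<^sup>2) summable_on {m}" by simp
  then have "(\<lambda>i. (cmod (delta m i))\<^sup>2) summable_on UNIV"
    by (rule summable_on_cong_neutral[where S="{m}" and T=UNIV, THEN iffD1, rotated -1]) (auto simp: delta_def)
  then show ?thesis unfolding ell2_def by simp
qed

lemma nrm_delta: "nrm (delta m) UNIV = 1"
proof -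
  have "tsq (delta m) UNIV = (\<Sum>\<^sub>\<infinity>i\<in>{m}. (cmod (delta m i))\<^sup>2)"
    unfolding tsq_def by (rule infsum_cong_neutral) (auto simp: delta_def)
  then show ?thesis by (simp add: nrm_def delta_def)
qed

lemma inner_delta_right: "ell2_inner x (delta j) = x j"
proof -
  have "ell2_inner x (delta j) = (\<Sum>\<^sub>\<infinity>i\<in>{j}. x i * cnj (delta j i))"
    unfolding ell2_inner_def by (rule infsum_cong_neutral) (auto simp: delta_def)
  then show ?thesis by (simp add: delta_def)
qed

lemma inner_delta_left: "ell2_inner (delta j) y = cnj (y j)"
proof -
  have "ell2_inner (delta j) y = (\<Sum>\<^sub>\<infinity>i\<in>{j}. delta j i * cnj (y i))"
    unfolding ell2_inner_def by (rule infsum_cong_neutral) (auto simp: delta_def)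
  then show ?thesis by (simp add: delta_def)
qed


lemma bo_ell2: "bounded_op C \<Longrightarrow> x \<in> ell2 \<Longrightarrow> C x \<in> ell2"
  unfolding bounded_op_def by blast
lemma bo_add: "bounded_op C \<Longrightarrow> x \<in> ell2 \<Longrightarrow> y \<in> ell2 \<Longrightarrow> C (\<lambda>i. x i + y i) = (\<lambda>i. C x i + C y i)"
  unfolding bounded_op_def by blast
lemma bo_scale: "bounded_op C \<Longrightarrow> x \<in> ell2 \<Longrightarrow> C (\<lambda>i. c * x i) = (\<lambda>i. c * C x i)"
  unfolding bounded_op_def by blast
lemma bo_zero: "bounded_op C \<Longrightarrow> C (\<lambda>i. 0) = (\<lambda>i. 0)"
  using bo_scale[of C "\<lambda>i. 0" 0] zero_ell2 by simp

lemma bo_sum: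
  assumes C: "bounded_op C" and "finite K" "\<forall>k\<in>K. v k \<in> ell2"
  shows "C (\<lambda>i. \<Sum>k\<in>K. c k * v k i) = (\<lambda>i. \<Sum>k\<in>K. c k * C (v k) i)"
  using assms(2,3)
proof (induction K rule: finite_induct)
  case empty
  then show ?case using bo_zero[OF C] by simp
next
  case (insert a K)
  have e: "(\<lambda>i. \<Sum>k\<in>insert a K. c k * v k i) = (\<lambda>i. c a * v a i + (\<Sum>k\<in>K. c k * v k i))"
    using insert by simp
  have va: "(\<lambda>i. c a * v a i) \<in> ell2" using insert scale_ell2 by auto
  have vs: "(\<lambda>i. \<Sum>k\<in>K. c k * v k i) \<in> ell2"
    using mink_sum[of K "\<lambda>k i. c k * v k i"] insert scale_ell2 by auto
  show ?case unfolding e bo_add[OF C va vs] using insert bo_scale[OF C] by auto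
qed

lemma nrm_zero_imp: "x \<in> ell2 \<Longrightarrow> nrm x UNIV = 0 \<Longrightarrow> x = (\<lambda>i. 0)"
proof
  fix i assume "x \<in> ell2" "nrm x UNIV = 0"
  then have "cmod (x i) \<le> 0" using pt_le[of x i UNIV] by simp
  then show "x i = 0" by simp
qed

lemma bo_opnorm:
  assumes C: "bounded_op C"
  shows "0 \<le> op_norm C" "x \<in> ell2 \<Longrightarrow> nrm (C x) UNIV \<le> op_norm C * nrm x UNIV"
proof -
  obtain K where K: "\<forall>x\<in>ell2. ell2_norm (C x) \<le> K * ell2_norm x"
    using C unfolding bounded_op_def by blast
  define St where "St = {ell2_norm (C x) | x. x \<in> ell2 \<and> ell2_norm x \<le> 1}"
  have bdd: "bdd_above St"
  proof (rule bdd_aboveI)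
    fix r assume "r \<in> St"
    then obtain x where x: "x \<in> ell2" "ell2_norm x \<le> 1" "r = ell2_norm (C x)" unfolding St_def by blast
    have n0: "0 \<le> ell2_norm x" by (simp add: ell2_norm_nrm nrm_nonneg)
    have "K * ell2_norm x \<le> max K 0 * ell2_norm x" using n0 by (simp add: mult_right_mono)
    also have "\<dots> \<le> max K 0" using x(2) n0 by (simp add: mult_left_le)
    finally show "r \<le> max K 0" using K x by force
  qed
  have up: "ell2_norm (C x) \<le> op_norm C" if "x \<in> ell2" "ell2_norm x \<le> 1" for x
    unfolding op_norm_def St_def[symmetric] by (rule cSup_upper[OF _ bdd]) (use that in \<open>auto simp: St_def\<close>)
  show "0 \<le> op_norm C"
    using up[of "\<lambda>i. 0"] zero_ell2 bo_zero[OF C] by (simp add: ell2_norm_nrm nrm_zero)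
  assume x: "x \<in> ell2"
  show "nrm (C x) UNIV \<le> op_norm C * nrm x UNIV"
  proof (cases "nrm x UNIV = 0")
    case True
    then have "x = (\<lambda>i. 0)" using nrm_zero_imp x by blast
    then show ?thesis using bo_zero[OF C] by (simp add: nrm_zero)
  next
    case False
    define n where "n = nrm x UNIV"
    have np: "n > 0" using False nrm_nonneg[of x UNIV] unfolding n_def by linarith
    define y where "y = (\<lambda>i. (1 / n) * x i)"
    have y: "y \<in> ell2" unfolding y_def using scale_ell2 x by blast
    have ny: "nrm y UNIV = 1" unfolding y_def nrm_scale n_def[symmetric] using np
      by (simp add: norm_divide)
    have Cy: "C y = (\<lambda>i. (1 / n) * C x i)" unfolding y_def by (rule bo_scale[OF C x])
    have "nrm (C y) UNIV \<le> op_norm C" using up[OF y] ny by (simp add: ell2_norm_nrm)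
    then have "(1 / n) * nrm (C x) UNIV \<le> op_norm C" unfolding Cy nrm_scale using np
      by (simp add: norm_divide)
    then show ?thesis using np unfolding n_def[symmetric] by (simp add: field_simps)
  qed
qed

lemma bo_opnorm_pt:
  assumes C: "bounded_op C" and x: "x \<in> ell2"
  shows "cmod (C x i) \<le> op_norm C * nrm x UNIV"
  using pt_le[OF bo_ell2[OF C x], of i UNIV] bo_opnorm(2)[OF C x] by simp

lemma bounded_opI:
  assumes "\<forall>x\<in>ell2. C x \<in> ell2"
    "\<forall>x\<in>ell2. \<forall>y\<in>ell2. C (\<lambda>i. x i + y i) = (\<lambda>i. C x i + C y i)"
    "\<forall>c. \<forall>x\<in>ell2. C (\<lambda>i. c * x i) = (\<lambda>i. c * C x i)"
    "\<forall>x\<in>ell2. nrm (C x) UNIV \<le> K * nrm x UNIV"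
  shows "bounded_op C"
  unfolding bounded_op_def ell2_norm_nrm using assms by blast

lemma bounded_op_add:
  fixes A :: "'i op"
  assumes A: "bounded_op A" and B: "bounded_op B"
  shows "bounded_op (op_add A B)"
proof (rule bounded_opI[where K="op_norm A + op_norm B"])
  show "\<forall>x\<in>ell2. op_add A B x \<in> ell2"
    unfolding op_add_def using mink[OF bo_ell2[OF A] bo_ell2[OF B]] by simp
  show "\<forall>x\<in>ell2. \<forall>y\<in>ell2. op_add A B (\<lambda>i. x i + y i) = (\<lambda>i. op_add A B x i + op_add A B y i)"
    unfolding op_add_def by (simp add: bo_add[OF A] bo_add[OF B] algebra_simps)
  show "\<forall>c. \<forall>x\<in>ell2. op_add A B (\<lambda>i. c * x i) = (\<lambda>i. c * op_add A B x i)"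
    unfolding op_add_def by (simp add: bo_scale[OF A] bo_scale[OF B] algebra_simps)
  show "\<forall>x\<in>ell2. nrm (op_add A B x) UNIV \<le> (op_norm A + op_norm B) * nrm x UNIV"
  proof
    fix x :: "'i \<Rightarrow> complex" assume x: "x \<in> ell2"
    have "nrm (op_add A B x) UNIV \<le> nrm (A x) UNIV + nrm (B x) UNIV"
      unfolding op_add_def using mink[OF bo_ell2[OF A x] bo_ell2[OF B x]] by simp
    also have "\<dots> \<le> (op_norm A + op_norm B) * nrm x UNIV"
      using bo_opnorm(2)[OF A x] bo_opnorm(2)[OF B x] by (simp add: algebra_simps)
    finally show "nrm (op_add A B x) UNIV \<le> (op_norm A + op_norm B) * nrm x UNIV" .
  qed
qed

lemma bounded_op_scale:
  fixes A :: "'i op"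
  assumes A: "bounded_op A"
  shows "bounded_op (op_scale c A)"
proof (rule bounded_opI[where K="cmod c * op_norm A"])
  show "\<forall>x\<in>ell2. op_scale c A x \<in> ell2"
    unfolding op_scale_def using scale_ell2[OF bo_ell2[OF A]] by simp
  show "\<forall>x\<in>ell2. \<forall>y\<in>ell2. op_scale c A (\<lambda>i. x i + y i) = (\<lambda>i. op_scale c A x i + op_scale c A y i)"
    unfolding op_scale_def by (simp add: bo_add[OF A] algebra_simps)
  show "\<forall>c'. \<forall>x\<in>ell2. op_scale c A (\<lambda>i. c' * x i) = (\<lambda>i. c' * op_scale c A x i)"
    unfolding op_scale_def by (simp add: bo_scale[OF A] algebra_simps)
  show "\<forall>x\<in>ell2. nrm (op_scale c A x) UNIV \<le> (cmod c * op_norm A) * nrm x UNIV"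
  proof
    fix x :: "'i \<Rightarrow> complex" assume x: "x \<in> ell2"
    show "nrm (op_scale c A x) UNIV \<le> (cmod c * op_norm A) * nrm x UNIV"
      unfolding op_scale_def nrm_scale mult.assoc
      by (rule mult_left_mono[OF bo_opnorm(2)[OF A x] norm_ge_zero])
  qed
qed

lemma op_diff_eq: "op_diff A B = op_add A (op_scale (-1) B)"
  unfolding op_diff_def op_add_def op_scale_def by simp

lemma bounded_op_diff: "bounded_op A \<Longrightarrow> bounded_op B \<Longrightarrow> bounded_op (op_diff A B)"
  unfolding op_diff_eq by (intro bounded_op_add bounded_op_scale)

lemma bounded_op_mult:
  fixes A :: "'i op"
  assumes A: "bounded_op A" and B: "bounded_op B"
  shows "bounded_op (op_mult A B)"
proof (rule bounded_opI[where K="op_norm A * op_norm B"])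
  show "\<forall>x\<in>ell2. op_mult A B x \<in> ell2"
    unfolding op_mult_def using bo_ell2[OF A bo_ell2[OF B]] by simp
  show "\<forall>x\<in>ell2. \<forall>y\<in>ell2. op_mult A B (\<lambda>i. x i + y i) = (\<lambda>i. op_mult A B x i + op_mult A B y i)"
    unfolding op_mult_def by (simp add: bo_add[OF A] bo_add[OF B] bo_ell2[OF B])
  show "\<forall>c. \<forall>x\<in>ell2. op_mult A B (\<lambda>i. c * x i) = (\<lambda>i. c * op_mult A B x i)"
    unfolding op_mult_def by (simp add: bo_scale[OF A] bo_scale[OF B] bo_ell2[OF B])
  show "\<forall>x\<in>ell2. nrm (op_mult A B x) UNIV \<le> (op_norm A * op_norm B) * nrm x UNIV"
  proof
    fix x :: "'i \<Rightarrow> complex" assume x: "x \<in> ell2"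
    have "nrm (A (B x)) UNIV \<le> op_norm A * nrm (B x) UNIV" using bo_opnorm(2)[OF A bo_ell2[OF B x]] .
    also have "\<dots> \<le> op_norm A * (op_norm B * nrm x UNIV)"
      using bo_opnorm(2)[OF B x] bo_opnorm(1)[OF A] by (simp add: mult_left_mono)
    finally show "nrm (op_mult A B x) UNIV \<le> (op_norm A * op_norm B) * nrm x UNIV"
      unfolding op_mult_def by (simp add: mult.assoc)
  qed
qed

lemma sum_delta: "(\<lambda>k. \<Sum>j\<in>F. c j * delta j k) = (\<lambda>k. if k \<in> F then c k else 0)" if "finite F"
proof
  fix k
  have "(\<Sum>j\<in>F. c j * delta j k) = (\<Sum>j\<in>F. if j = k then c j else 0)"
    by (rule sum.cong) (auto simp: delta_def)
  then show "(\<Sum>j\<in>F. c j * delta j k) = (if k \<in> F then c k else 0)"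
    using that by (simp add: sum.delta)
qed

lemma tsq_restrict: "tsq (\<lambda>k. if k \<in> F then c k else 0) UNIV = tsq c F"
  unfolding tsq_def by (rule infsum_cong_neutral) auto

lemma col_bound:
  assumes C: "bounded_op C"
  shows "(\<lambda>j. C (delta j) i) \<in> ell2 \<and> nrm (\<lambda>j. C (delta j) i) UNIV \<le> op_norm C"
proof -
  define c where "c = (\<lambda>j. C (delta j) i)"
  have key: "L2_set (\<lambda>j. cmod (c j)) F \<le> op_norm C" if F: "finite F" for F
  proof -
    define s where "s = (\<Sum>j\<in>F. (cmod (c j))\<^sup>2)"
    have s0: "0 \<le> s" unfolding s_def by (simp add: sum_nonneg)
    define y where "y = (\<lambda>k. \<Sum>j\<in>F. cnj (c j) * delta j k)"
    have yy: "\<forall>k\<in>F. (\<lambda>ka. cnj (c k) * delta k ka) \<in> ell2" by (simp add: scale_ell2 delta_ell2)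
    have y: "y \<in> ell2" unfolding y_def using conjunct1[OF mink_sum[OF F yy]] .
    have Cy: "C y = (\<lambda>k. \<Sum>j\<in>F. cnj (c j) * C (delta j) k)"
      unfolding y_def by (rule bo_sum[OF C F]) (simp add: delta_ell2)
    have "C y i = (\<Sum>j\<in>F. cnj (c j) * c j)" unfolding Cy c_def by simp
    also have "\<dots> = of_real s" unfolding s_def of_real_sum
      by (rule sum.cong[OF refl]) (subst complex_norm_square, rule mult.commute)
    finally have Cyi: "C y i = of_real s" .
    have "tsq y UNIV = tsq (\<lambda>k. cnj (c k)) F" unfolding y_def sum_delta[OF F] by (rule tsq_restrict)
    then have ny: "nrm y UNIV = sqrt s"
      unfolding nrm_def using F by (simp add: tsq_def s_def)
    have "s \<le> op_norm C * sqrt s"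
      using bo_opnorm_pt[OF C y, of i] unfolding Cyi ny using s0 by simp
    then have "sqrt s * sqrt s \<le> op_norm C * sqrt s" using s0 by simp
    then have "sqrt s \<le> op_norm C"
    proof (cases "s = 0")
      case True then show ?thesis using bo_opnorm(1)[OF C] by simp
    next
      case False
      then have "0 < sqrt s" using s0 by simp
      then show ?thesis using mult_right_le_imp_le[OF \<open>sqrt s * sqrt s \<le> op_norm C * sqrt s\<close>] by blast
    qed
    then show ?thesis unfolding L2_set_def s_def .
  qed
  show ?thesis
    using nrm_boundI[of "op_norm C" UNIV c] key bo_opnorm(1)[OF C] unfolding ell2_def c_def by auto
qed


lemma cs:
  assumes x: "x \<in> ell2" and y: "y \<in> ell2"
  shows "(\<lambda>k. x k * y k) summable_on S \<and> cmod (\<Sum>\<^sub>\<infinity>k\<in>S. x k * y k) \<le> nrm x S * nrm y S"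
proof -
  have sa: "(\<lambda>k. (cmod (x k))\<^sup>2 + (cmod (y k))\<^sup>2) summable_on S"
    by (rule summable_on_add) (use x y in \<open>auto simp: ell2_summ\<close>)
  have le: "cmod (x k * y k) \<le> (cmod (x k))\<^sup>2 + (cmod (y k))\<^sup>2" for k
  proof -
    have "0 \<le> (cmod (x k) - cmod (y k))\<^sup>2" by simp
    then have "2 * (cmod (x k) * cmod (y k)) \<le> (cmod (x k))\<^sup>2 + (cmod (y k))\<^sup>2"
      by (simp add: power2_diff)
    moreover have "0 \<le> cmod (x k) * cmod (y k)" by simp
    ultimately show ?thesis unfolding norm_mult by linarith
  qed
  have abs: "Infinite_Sum.abs_summable_on (\<lambda>k. x k * y k) S"
    by (rule summable_on_comparison_test[OF sa]) (use le in auto)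
  have summ: "(\<lambda>k. x k * y k) summable_on S" using abs_summable_summable[OF abs] .
  have "cmod (\<Sum>\<^sub>\<infinity>k\<in>S. x k * y k) \<le> (\<Sum>\<^sub>\<infinity>k\<in>S. cmod (x k * y k))"
    by (rule norm_infsum_bound[OF abs])
  also have "\<dots> \<le> nrm x S * nrm y S"
  proof (rule infsum_le_finite_sums[OF abs])
    fix F assume F: "finite F" "F \<subseteq> S"
    have "(\<Sum>k\<in>F. cmod (x k * y k)) = (\<Sum>k\<in>F. \<bar>cmod (x k)\<bar> * \<bar>cmod (y k)\<bar>)"
      by (simp add: norm_mult)
    also have "\<dots> \<le> L2_set (\<lambda>k. cmod (x k)) F * L2_set (\<lambda>k. cmod (y k)) F"
      by (rule L2_set_mult_ineq)
    also have "\<dots> \<le> nrm x S * nrm y S"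
      by (rule mult_mono) (use L2_le_nrm[OF x F] L2_le_nrm[OF y F] nrm_nonneg in auto)
    finally show "(\<Sum>k\<in>F. cmod (x k * y k)) \<le> nrm x S * nrm y S" .
  qed
  finally show ?thesis using summ by blast
qed

lemma infsum_finsum:
  fixes f :: "'j \<Rightarrow> 'k \<Rightarrow> complex"
  assumes "finite F" "\<forall>j\<in>F. f j summable_on A"
  shows "(\<lambda>k. \<Sum>j\<in>F. f j k) summable_on A \<and> (\<Sum>\<^sub>\<infinity>k\<in>A. \<Sum>j\<in>F. f j k) = (\<Sum>j\<in>F. \<Sum>\<^sub>\<infinity>k\<in>A. f j k)"
  using assms
proof (induction F rule: finite_induct)
  case empty
  then show ?case by simp
next
  case (insert a F)
  then have IH: "(\<lambda>k. \<Sum>j\<in>F. f j k) summable_on A" "(\<Sum>\<^sub>\<infinity>k\<in>A. \<Sum>j\<in>F. f j k) = (\<Sum>j\<in>F. \<Sum>\<^sub>\<infinity>k\<in>A. f j k)"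
    and fa: "f a summable_on A" by auto
  have e: "(\<lambda>k. \<Sum>j\<in>insert a F. f j k) = (\<lambda>k. f a k + (\<Sum>j\<in>F. f j k))" using insert by simp
  show ?case unfolding e
    using summable_on_add[OF fa IH(1)] infsum_add[OF fa IH(1)] IH(2) insert by simp
qed

lemma fin_vec:
  assumes F: "finite F"
  shows "(\<lambda>k. \<Sum>j\<in>F. cnj (w j) * delta j k) \<in> ell2 \<and>
         nrm (\<lambda>k. \<Sum>j\<in>F. cnj (w j) * delta j k) UNIV = sqrt (\<Sum>j\<in>F. (cmod (w j))\<^sup>2)"
proof -
  have yy: "\<forall>k\<in>F. (\<lambda>ka. cnj (w k) * delta k ka) \<in> ell2" by (simp add: scale_ell2 delta_ell2)
  have y: "(\<lambda>k. \<Sum>j\<in>F. cnj (w j) * delta j k) \<in> ell2" using conjunct1[OF mink_sum[OF F yy]] .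
  have "tsq (\<lambda>k. \<Sum>j\<in>F. cnj (w j) * delta j k) UNIV = tsq (\<lambda>k. cnj (w k)) F"
    unfolding sum_delta[OF F] by (rule tsq_restrict)
  then show ?thesis using y F by (simp add: nrm_def tsq_def)
qed

lemma sum_cnj_self: "(\<Sum>j\<in>F. cnj (w j) * w j) = of_real (\<Sum>j\<in>F. (cmod (w j))\<^sup>2)"
  unfolding of_real_sum by (rule sum.cong[OF refl]) (subst complex_norm_square, rule mult.commute)

lemma sqrt_le_from:
  assumes "s \<le> b * sqrt s" "0 \<le> s" "0 \<le> b"
  shows "sqrt s \<le> b"
proof (cases "s = 0")
  case True then show ?thesis using assms by simp
next
  case False
  then have p: "0 < sqrt s" using assms by simp
  have "sqrt s * sqrt s \<le> b * sqrt s" using assms by simp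
  then show ?thesis using mult_right_le_imp_le p by blast
qed

lemma ev_fin_ex: "eventually P (finite_subsets_at_top A) \<Longrightarrow> \<exists>F. finite F \<and> F \<subseteq> A \<and> P F"
  unfolding eventually_finite_subsets_at_top by auto

lemma repr:
  assumes C: "bounded_op C" and x: "x \<in> ell2"
  shows "(\<lambda>k. x k * C (delta k) i) summable_on UNIV \<and> C x i = (\<Sum>\<^sub>\<infinity>k. x k * C (delta k) i)"
proof -
  define a where "a = (\<lambda>k. C (delta k) i)"
  have a: "a \<in> ell2" unfolding a_def using col_bound[OF C] by blast
  have summ: "(\<lambda>k. x k * a k) summable_on UNIV" using cs[OF x a] by blast
  define L where "L = (\<Sum>\<^sub>\<infinity>k. x k * a k)"
  define K where "K = op_norm C"
  have K0: "0 \<le> K" unfolding K_def using bo_opnorm(1)[OF C] .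
  have "cmod (C x i - L) \<le> e" if e: "e > 0" for e
  proof -
    define dl where "dl = e / (2 * (K + 1))"
    have dl: "dl > 0" unfolding dl_def using e K0 by simp
    have h1: "((\<lambda>k. (cmod (x k))\<^sup>2) has_sum tsq x UNIV) UNIV"
      unfolding tsq_def using ell2_summ[OF x] by (rule has_sum_infsum)
    have h2: "((\<lambda>k. x k * a k) has_sum L) UNIV"
      unfolding L_def using summ by (rule has_sum_infsum)
    have ev1: "\<forall>\<^sub>F F in finite_subsets_at_top UNIV. dist (\<Sum>k\<in>F. (cmod (x k))\<^sup>2) (tsq x UNIV) < dl\<^sup>2"
      using h1 unfolding has_sum_def by (rule tendstoD) (use dl in simp)
    have ev2: "\<forall>\<^sub>F F in finite_subsets_at_top UNIV. dist (\<Sum>k\<in>F. x k * a k) L < e / 2"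
      using h2 unfolding has_sum_def by (rule tendstoD) (use e in simp)
    obtain F where F: "finite F" and F1: "dist (\<Sum>k\<in>F. (cmod (x k))\<^sup>2) (tsq x UNIV) < dl\<^sup>2"
      and F2: "dist (\<Sum>k\<in>F. x k * a k) L < e / 2"
      using ev_fin_ex[OF eventually_conj[OF ev1 ev2]] by blast
    define xF where "xF = (\<lambda>k. \<Sum>m\<in>F. x m * delta m k)"
    have xF_eq: "xF = (\<lambda>k. if k \<in> F then x k else 0)" unfolding xF_def by (rule sum_delta[OF F])
    have xF: "xF \<in> ell2" unfolding xF_def
      using conjunct1[OF mink_sum[OF F, of "\<lambda>m k. x m * delta m k"]] by (simp add: scale_ell2 delta_ell2)
    define r where "r = (\<lambda>k. x k + (-1) * xF k)"
    have r: "r \<in> ell2" unfolding r_def using mink[OF x scale_ell2[OF xF]] by blast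
    have r_eq: "r = (\<lambda>k. if k \<in> F then 0 else x k)" unfolding r_def xF_eq by auto
    have xsplit: "x = (\<lambda>k. xF k + r k)" unfolding r_def by simp
    have CxF: "C xF i = (\<Sum>k\<in>F. x k * a k)"
      unfolding xF_def a_def by (subst bo_sum[OF C F]) (auto simp: delta_ell2)
    have Cx: "C x i = C xF i + C r i"
      by (subst xsplit) (simp add: bo_add[OF C xF r])
    have tr: "tsq r UNIV = tsq x (UNIV - F)"
      unfolding tsq_def r_eq by (rule infsum_cong_neutral) auto
    have "tsq x (UNIV - F) = tsq x UNIV - (\<Sum>k\<in>F. (cmod (x k))\<^sup>2)"
      unfolding tsq_def by (subst infsum_Diff) (use ell2_summ[OF x] F in auto)
    then have "tsq r UNIV < dl\<^sup>2" using tr F1 by (simp add: dist_real_def)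
    then have "sqrt (tsq r UNIV) < sqrt (dl\<^sup>2)" by (rule real_sqrt_less_mono)
    then have nr: "nrm r UNIV < dl" unfolding nrm_def using dl by simp
    have "cmod (C r i) \<le> K * nrm r UNIV" unfolding K_def by (rule bo_opnorm_pt[OF C r])
    also have "\<dots> \<le> K * dl" using nr K0 by (simp add: mult_left_mono)
    also have "\<dots> \<le> e / 2"
    proof -
      have "K * dl = (e / 2) * (K / (K + 1))" unfolding dl_def using K0 by (simp add: field_simps)
      also have "\<dots> \<le> (e / 2) * 1" using K0 e by (intro mult_left_mono) auto
      finally show ?thesis by simp
    qed
    finally have c1: "cmod (C r i) \<le> e / 2" .
    have c2: "cmod (C xF i - L) < e / 2" using F2 CxF by (simp add: dist_norm)
    have "cmod (C x i - L) \<le> cmod (C xF i - L) + cmod (C r i)"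
    proof -
      have eq: "C x i - L = (C xF i - L) + C r i" unfolding Cx by simp
      show ?thesis unfolding eq by (rule norm_triangle_ineq)
    qed
    then show ?thesis using c1 c2 by simp
  qed
  note H = this
  have "cmod (C x i - L) \<le> 0"
  proof (rule field_le_epsilon)
    fix e :: real assume "0 < e"
    then show "cmod (C x i - L) \<le> 0 + e" using H[of e] by simp
  qed
  then show ?thesis using summ unfolding L_def a_def by simp
qed

lemma adj_bound:
  assumes C: "bounded_op C" and r: "r \<in> ell2"
  shows "(\<lambda>j. \<Sum>\<^sub>\<infinity>k. C (delta j) k * r k) \<in> ell2 \<and>
         nrm (\<lambda>j. \<Sum>\<^sub>\<infinity>k. C (delta j) k * r k) UNIV \<le> op_norm C * nrm r UNIV"
proof -
  define w where "w = (\<lambda>j. \<Sum>\<^sub>\<infinity>k. C (delta j) k * r k)"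
  define b where "b = op_norm C * nrm r UNIV"
  have b0: "0 \<le> b" unfolding b_def by (simp add: bo_opnorm(1)[OF C] nrm_nonneg)
  have key: "L2_set (\<lambda>j. cmod (w j)) F \<le> b" if F: "finite F" for F
  proof -
    define s where "s = (\<Sum>j\<in>F. (cmod (w j))\<^sup>2)"
    have s0: "0 \<le> s" unfolding s_def by (simp add: sum_nonneg)
    define y where "y = (\<lambda>k. \<Sum>j\<in>F. cnj (w j) * delta j k)"
    have y: "y \<in> ell2" and ny: "nrm y UNIV = sqrt s" unfolding y_def s_def using fin_vec[OF F] by auto
    have Cy: "C y = (\<lambda>k. \<Sum>j\<in>F. cnj (w j) * C (delta j) k)"
      unfolding y_def by (rule bo_sum[OF C F]) (simp add: delta_ell2)
    have sj: "\<forall>j\<in>F. (\<lambda>k. cnj (w j) * (C (delta j) k * r k)) summable_on UNIV"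
      using cs[OF bo_ell2[OF C delta_ell2] r] by (simp add: summable_on_cmult_right)
    have "(\<Sum>\<^sub>\<infinity>k. C y k * r k) = (\<Sum>\<^sub>\<infinity>k. \<Sum>j\<in>F. cnj (w j) * (C (delta j) k * r k))"
      unfolding Cy by (simp add: sum_distrib_right mult.assoc)
    also have "\<dots> = (\<Sum>j\<in>F. \<Sum>\<^sub>\<infinity>k. cnj (w j) * (C (delta j) k * r k))"
      using infsum_finsum[OF F sj] by simp
    also have "\<dots> = (\<Sum>j\<in>F. cnj (w j) * w j)"
      unfolding w_def by (simp add: infsum_cmult_right')
    also have "\<dots> = of_real s" unfolding s_def by (rule sum_cnj_self)
    finally have eq: "(\<Sum>\<^sub>\<infinity>k. C y k * r k) = of_real s" .
    have "s \<le> nrm (C y) UNIV * nrm r UNIV"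
      using conjunct2[OF cs[OF bo_ell2[OF C y] r, of UNIV]] unfolding eq using s0 by simp
    also have "\<dots> \<le> (op_norm C * sqrt s) * nrm r UNIV"
      using bo_opnorm(2)[OF C y] ny by (simp add: mult_right_mono nrm_nonneg)
    also have "\<dots> = b * sqrt s" unfolding b_def by simp
    finally have "sqrt s \<le> b" using sqrt_le_from s0 b0 by blast
    then show ?thesis unfolding L2_set_def s_def .
  qed
  show ?thesis
    using nrm_boundI[of b UNIV w] key b0 unfolding ell2_def w_def b_def by auto
qed


definition RN :: "('i \<Rightarrow> 'i \<Rightarrow> real) \<Rightarrow> ('i \<Rightarrow> 'i \<Rightarrow> complex) \<Rightarrow> bool" where
  "RN d v \<longleftrightarrow> (\<forall>\<epsilon>>0. \<exists>N>0. \<forall>i. nrm (v i) (UNIV - ball_qd d N i) \<le> \<epsilon>)"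

lemma rne_RN: "row_nonexpansive_entries d v \<longleftrightarrow> RN d v"
proof
  assume H: "row_nonexpansive_entries d v"
  show "RN d v" unfolding RN_def
  proof (intro allI impI)
    fix e :: real assume e: "e > 0"
    then obtain N where N: "N > 0" "\<forall>i. tsq (v i) (UNIV - ball_qd d N i) < e\<^sup>2"
      using H unfolding row_nonexpansive_entries_def tsq_def by (meson zero_less_power)
    have "nrm (v i) (UNIV - ball_qd d N i) \<le> e" for i
    proof -
      have "sqrt (tsq (v i) (UNIV - ball_qd d N i)) < sqrt (e\<^sup>2)" using N(2) real_sqrt_less_mono by blast
      then show ?thesis unfolding nrm_def using e by simp
    qed
    then show "\<exists>N>0. \<forall>i. nrm (v i) (UNIV - ball_qd d N i) \<le> e" using N(1) by blast
  qed
next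
  assume H: "RN d v"
  show "row_nonexpansive_entries d v" unfolding row_nonexpansive_entries_def
  proof (intro allI impI)
    fix e :: real assume e: "e > 0"
    then obtain N where N: "N > 0" "\<forall>i. nrm (v i) (UNIV - ball_qd d N i) \<le> sqrt e / 2"
      using H unfolding RN_def by (meson divide_pos_pos real_sqrt_gt_zero zero_less_numeral)
    have "tsq (v i) (UNIV - ball_qd d N i) < e" for i
    proof -
      have a: "sqrt (tsq (v i) (UNIV - ball_qd d N i)) \<le> sqrt e / 2" using N(2) unfolding nrm_def by blast
      have pe: "0 < sqrt e" using e by simp
      have "sqrt (tsq (v i) (UNIV - ball_qd d N i)) < sqrt e" using a pe by linarith
      then show ?thesis by (simp only: real_sqrt_less_iff)
    qed
    then show "\<exists>N>0. \<forall>i. (\<Sum>\<^sub>\<infinity>j\<in>UNIV - ball_qd d N i. (cmod (v i j))\<^sup>2) < e"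
      using N(1) unfolding tsq_def by blast
  qed
qed

lemma RN_cnj: "RN d (\<lambda>i j. cnj (v i j)) \<longleftrightarrow> RN d v"
  unfolding RN_def nrm_def tsq_def by simp

lemma nonexpansive_RN:
  "nonexpansive d C \<longleftrightarrow> RN d (\<lambda>i. C (delta i)) \<and> RN d (\<lambda>i j. C (delta j) i)"
proof -
  have e1: "(\<lambda>i j. ell2_inner (C (delta i)) (delta j)) = (\<lambda>i. C (delta i))"
    by (simp add: inner_delta_right)
  have e2: "(\<lambda>i j. ell2_inner (delta i) (C (delta j))) = (\<lambda>i j. cnj (C (delta j) i))"
    by (simp add: inner_delta_left)
  show ?thesis unfolding nonexpansive_def row_nonexpansive_def e1 e2 rne_RN RN_cnj ..
qed

lemma ball_anti: "N \<le> N' \<Longrightarrow> UNIV - ball_qd d N' i \<subseteq> UNIV - ball_qd d N i"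
  unfolding ball_qd_def by auto

lemma RN_add:
  assumes v: "\<forall>i. v i \<in> ell2" and w: "\<forall>i. w i \<in> ell2" and "RN d v" "RN d w"
  shows "RN d (\<lambda>i j. v i j + w i j)"
  unfolding RN_def
proof (intro allI impI)
  fix e :: real assume e: "e > 0"
  obtain N1 where N1: "N1 > 0" "\<forall>i. nrm (v i) (UNIV - ball_qd d N1 i) \<le> e / 2"
    using assms(3) e unfolding RN_def by (meson half_gt_zero)
  obtain N2 where N2: "N2 > 0" "\<forall>i. nrm (w i) (UNIV - ball_qd d N2 i) \<le> e / 2"
    using assms(4) e unfolding RN_def by (meson half_gt_zero)
  have "nrm (\<lambda>j. v i j + w i j) (UNIV - ball_qd d (max N1 N2) i) \<le> e" for i
  proof -
    let ?S = "UNIV - ball_qd d (max N1 N2) i"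
    have "nrm (\<lambda>j. v i j + w i j) ?S \<le> nrm (v i) ?S + nrm (w i) ?S"
      using mink[OF v[rule_format] w[rule_format]] by blast
    also have "nrm (v i) ?S \<le> nrm (v i) (UNIV - ball_qd d N1 i)"
      by (rule nrm_mono[OF v[rule_format] ball_anti]) simp
    also have "nrm (w i) ?S \<le> nrm (w i) (UNIV - ball_qd d N2 i)"
      by (rule nrm_mono[OF w[rule_format] ball_anti]) simp
    finally have "nrm (\<lambda>j. v i j + w i j) ?S \<le> nrm (v i) (UNIV - ball_qd d N1 i) + nrm (w i) (UNIV - ball_qd d N2 i)" by auto
    then show ?thesis using N1(2)[rule_format, of i] N2(2)[rule_format, of i] by linarith
  qed
  then show "\<exists>N>0. \<forall>i. nrm (\<lambda>j. v i j + w i j) (UNIV - ball_qd d N i) \<le> e"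
    using N1(1) by (intro exI[of _ "max N1 N2"]) auto
qed

lemma RN_scale:
  assumes "RN d v"
  shows "RN d (\<lambda>i j. c * v i j)"
  unfolding RN_def
proof (intro allI impI)
  fix e :: real assume e: "e > 0"
  have p: "e / (cmod c + 1) > 0" using e by (simp add: add_nonneg_pos)
  obtain N where N: "N > 0" "\<forall>i. nrm (v i) (UNIV - ball_qd d N i) \<le> e / (cmod c + 1)"
    using assms p unfolding RN_def by blast
  have "nrm (\<lambda>j. c * v i j) (UNIV - ball_qd d N i) \<le> e" for i
  proof -
    have "nrm (\<lambda>j. c * v i j) (UNIV - ball_qd d N i) = cmod c * nrm (v i) (UNIV - ball_qd d N i)"
      by (rule nrm_scale)
    also have "\<dots> \<le> cmod c * (e / (cmod c + 1))" by (rule mult_left_mono[OF N(2)[rule_format]]) simp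
    also have "\<dots> \<le> e"
    proof -
      have p1: "0 < cmod c + 1" by (smt (verit) norm_ge_zero)
      have "cmod c / (cmod c + 1) \<le> 1" using p1 by (simp add: pos_divide_le_eq)
      then have "e * (cmod c / (cmod c + 1)) \<le> e * 1" using e by (intro mult_left_mono) auto
      then show ?thesis by (simp add: mult.commute)
    qed
    finally show ?thesis .
  qed
  then show "\<exists>N>0. \<forall>i. nrm (\<lambda>j. c * v i j) (UNIV - ball_qd d N i) \<le> e" using N(1) by blast
qed

lemma diff_ell2: "x \<in> ell2 \<Longrightarrow> y \<in> ell2 \<Longrightarrow> (\<lambda>i. x i - y i) \<in> ell2"
  using mink[OF _ scale_ell2, of x y "-1"] by simp

lemma RN_approx:
  assumes v: "\<forall>i. v i \<in> ell2"
    and H: "\<forall>\<epsilon>>0. \<exists>w. RN d w \<and> (\<forall>i. w i \<in> ell2) \<and> (\<forall>i. nrm (\<lambda>j. v i j - w i j) UNIV \<le> \<epsilon>)"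
  shows "RN d v"
  unfolding RN_def
proof (intro allI impI)
  fix e :: real assume e: "e > 0"
  obtain w where w: "RN d w" "\<forall>i. w i \<in> ell2" "\<forall>i. nrm (\<lambda>j. v i j - w i j) UNIV \<le> e / 2"
    using H e by (meson half_gt_zero)
  obtain N where N: "N > 0" "\<forall>i. nrm (w i) (UNIV - ball_qd d N i) \<le> e / 2"
    using w(1) e unfolding RN_def by (meson half_gt_zero)
  have "nrm (v i) (UNIV - ball_qd d N i) \<le> e" for i
  proof -
    let ?S = "UNIV - ball_qd d N i"
    have dv: "(\<lambda>j. v i j - w i j) \<in> ell2" using diff_ell2 v w(2) by blast
    have eq: "v i = (\<lambda>j. (v i j - w i j) + w i j)" by simp
    have "nrm (\<lambda>j. (v i j - w i j) + w i j) ?S \<le> nrm (\<lambda>j. v i j - w i j) ?S + nrm (w i) ?S"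
      using mink[OF dv w(2)[rule_format, of i]] by blast
    then have "nrm (v i) ?S \<le> nrm (\<lambda>j. v i j - w i j) ?S + nrm (w i) ?S" by simp
    also have "nrm (\<lambda>j. v i j - w i j) ?S \<le> nrm (\<lambda>j. v i j - w i j) UNIV"
      by (rule nrm_mono[OF dv]) simp
    finally have "nrm (v i) ?S \<le> nrm (\<lambda>j. v i j - w i j) UNIV + nrm (w i) ?S" by auto
    then show ?thesis using w(3)[rule_format, of i] N(2)[rule_format, of i] by linarith
  qed
  then show "\<exists>N>0. \<forall>i. nrm (v i) (UNIV - ball_qd d N i) \<le> e" using N(1) by blast
qed


lemma frac_le: fixes a e :: real shows "0 \<le> a \<Longrightarrow> 0 < e \<Longrightarrow> a * (e / (2 * (a + 1))) \<le> e / 2"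
proof -
  assume a: "0 \<le> a" and e: "0 < e"
  have p1: "0 < a + 1" using a by simp
  have "a / (a + 1) \<le> 1" using p1 by (simp add: pos_divide_le_eq)
  then have "(e / 2) * (a / (a + 1)) \<le> (e / 2) * 1" using e by (intro mult_left_mono) auto
  moreover have "a * (e / (2 * (a + 1))) = (e / 2) * (a / (a + 1))" by simp
  ultimately show ?thesis by (simp add: mult.commute)
qed

lemma RN_prod:
  fixes d :: "'i \<Rightarrow> 'i \<Rightarrow> real"
  assumes qd: "quasi_distance d"
    and card: "\<forall>R>0. \<exists>M::nat. \<forall>i. finite (ball_qd d R i) \<and> card (ball_qd d R i) \<le> M"
    and P: "\<forall>k. P k \<in> ell2" "RN d P" and Pcol: "\<forall>j. (\<lambda>k. P k j) \<in> ell2"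
    and Kp: "0 \<le> Kp"
    and Pop: "\<forall>r\<in>ell2. (\<lambda>j. \<Sum>\<^sub>\<infinity>k. r k * P k j) \<in> ell2 \<and> nrm (\<lambda>j. \<Sum>\<^sub>\<infinity>k. r k * P k j) UNIV \<le> Kp * nrm r UNIV"
    and q: "\<forall>i. q i \<in> ell2" "RN d q" "\<forall>i. nrm (q i) UNIV \<le> Kq"
  shows "RN d (\<lambda>i j. \<Sum>\<^sub>\<infinity>k. q i k * P k j)"
  unfolding RN_def
proof (intro allI impI)
  fix e :: real assume e: "e > 0"
  have Kq: "0 \<le> Kq" using q(3)[rule_format, of undefined] nrm_nonneg[of "q undefined" UNIV] by linarith
  define e1 where "e1 = e / (2 * (Kp + 1))"
  have e1: "e1 > 0" unfolding e1_def using e Kp by simp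
  obtain N1 where N1: "N1 > 0" "\<forall>i. nrm (q i) (UNIV - ball_qd d N1 i) \<le> e1"
    using q(2) e1 unfolding RN_def by blast
  obtain M :: nat where M: "\<forall>i. finite (ball_qd d N1 i) \<and> card (ball_qd d N1 i) \<le> M"
    using card N1(1) by blast
  define e2 where "e2 = e / (2 * (real M * Kq + 1))"
  have MK: "0 \<le> real M * Kq" using Kq by simp
  have e2: "e2 > 0" unfolding e2_def using e MK by simp
  obtain N2 where N2: "N2 > 0" "\<forall>k. nrm (P k) (UNIV - ball_qd d N2 k) \<le> e2"
    using P(2) e2 unfolding RN_def by blast
  have main: "nrm (\<lambda>j. \<Sum>\<^sub>\<infinity>k. q i k * P k j) (UNIV - ball_qd d (N1 + N2) i) \<le> e" for i
  proof -
    define B where "B = ball_qd d N1 i"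
    define S where "S = UNIV - ball_qd d (N1 + N2) i"
    have B: "finite B" "card B \<le> M" using M unfolding B_def by auto
    have qi: "q i \<in> ell2" using q(1) by blast
    define r where "r = (\<lambda>k. if k \<in> B then 0 else q i k)"
    have r: "r \<in> ell2"
    proof (rule ell2_boundI[where b="tsq (q i) UNIV"])
      fix F :: "'i set" assume F: "finite F"
      have "(\<Sum>k\<in>F. (cmod (r k))\<^sup>2) \<le> (\<Sum>k\<in>F. (cmod (q i k))\<^sup>2)"
        by (rule sum_mono) (simp add: r_def)
      also have "\<dots> \<le> tsq (q i) UNIV" by (rule sum_le_tsq[OF qi F]) simp
      finally show "(\<Sum>k\<in>F. (cmod (r k))\<^sup>2) \<le> tsq (q i) UNIV" .
    qed
    have "tsq r UNIV = tsq (q i) (UNIV - B)"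
      unfolding tsq_def r_def by (rule infsum_cong_neutral) auto
    then have nr: "nrm r UNIV \<le> e1" using N1(2) unfolding nrm_def B_def by simp
    define f1 where "f1 = (\<lambda>j. \<Sum>m\<in>B. q i m * P m j)"
    define f2 where "f2 = (\<lambda>j. \<Sum>\<^sub>\<infinity>k. r k * P k j)"
    have split: "(\<lambda>j. \<Sum>\<^sub>\<infinity>k. q i k * P k j) = (\<lambda>j. f1 j + f2 j)"
    proof
      fix j
      have s1: "(\<lambda>k. r k * P k j) summable_on UNIV" using cs[OF r Pcol[rule_format]] by blast
      have "(\<lambda>k. if k \<in> B then q i k * P k j else 0) summable_on UNIV \<longleftrightarrow> (\<lambda>k. q i k * P k j) summable_on B"
        by (rule summable_on_cong_neutral) auto
      then have s2: "(\<lambda>k. if k \<in> B then q i k * P k j else 0) summable_on UNIV" using B(1) by simp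
      have i2: "(\<Sum>\<^sub>\<infinity>k. if k \<in> B then q i k * P k j else 0) = (\<Sum>\<^sub>\<infinity>k\<in>B. q i k * P k j)"
        by (rule infsum_cong_neutral) auto
      have eqk: "(\<lambda>k. q i k * P k j) = (\<lambda>k. r k * P k j + (if k \<in> B then q i k * P k j else 0))"
        by (auto simp: r_def)
      have "(\<Sum>\<^sub>\<infinity>k. q i k * P k j) = (\<Sum>\<^sub>\<infinity>k. r k * P k j) + (\<Sum>\<^sub>\<infinity>k. if k \<in> B then q i k * P k j else 0)"
        by (subst eqk) (rule infsum_add[OF s1 s2])
      also have "\<dots> = f2 j + f1 j" unfolding i2 f1_def f2_def using B(1) by simp
      finally show "(\<Sum>\<^sub>\<infinity>k. q i k * P k j) = f1 j + f2 j" by simp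
    qed
    have sc: "\<forall>m\<in>B. (\<lambda>j. q i m * P m j) \<in> ell2" using P(1) scale_ell2 by blast
    have f1: "f1 \<in> ell2" "nrm f1 S \<le> (\<Sum>m\<in>B. nrm (\<lambda>j. q i m * P m j) S)"
      unfolding f1_def using mink_sum[OF B(1) sc] by auto
    have f2: "f2 \<in> ell2" "nrm f2 UNIV \<le> Kp * nrm r UNIV" unfolding f2_def using Pop r by auto
    have "nrm (\<lambda>j. f1 j + f2 j) S \<le> nrm f1 S + nrm f2 S" using mink[OF f1(1) f2(1)] by blast
    moreover have "nrm f2 S \<le> e / 2"
    proof -
      have "nrm f2 S \<le> nrm f2 UNIV" by (rule nrm_mono[OF f2(1)]) simp
      also have "\<dots> \<le> Kp * nrm r UNIV" by (rule f2(2))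
      also have "\<dots> \<le> Kp * e1" using nr Kp by (simp add: mult_left_mono)
      also have "\<dots> \<le> e / 2" unfolding e1_def using frac_le[OF Kp e] .
      finally show ?thesis .
    qed
    moreover have "nrm f1 S \<le> e / 2"
    proof -
      have each: "nrm (\<lambda>j. q i m * P m j) S \<le> Kq * e2" if m: "m \<in> B" for m
      proof -
        have sub: "S \<subseteq> UNIV - ball_qd d N2 m"
        proof
          fix j assume j: "j \<in> S"
          show "j \<in> UNIV - ball_qd d N2 m"
          proof (rule ccontr)
            assume "j \<notin> UNIV - ball_qd d N2 m"
            then have a1: "d j m \<le> N2" unfolding ball_qd_def by simp
            have a2: "d m i \<le> N1" using m unfolding B_def ball_qd_def by simp
            have "d j i \<le> d j m + d m i" using qd unfolding quasi_distance_def by blast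
            then have "d j i \<le> N1 + N2" using a1 a2 by linarith
            then show False using j unfolding S_def ball_qd_def by simp
          qed
        qed
        have "nrm (\<lambda>j. q i m * P m j) S = cmod (q i m) * nrm (P m) S" by (rule nrm_scale)
        also have "\<dots> \<le> Kq * e2"
        proof (rule mult_mono)
          show "cmod (q i m) \<le> Kq" using pt_le[OF qi, of m UNIV] q(3) by (meson UNIV_I order_trans)
          have "nrm (P m) S \<le> nrm (P m) (UNIV - ball_qd d N2 m)" by (rule nrm_mono[OF P(1)[rule_format] sub])
          then show "nrm (P m) S \<le> e2" using N2(2)[rule_format, of m] by linarith
        qed (auto simp: Kq nrm_nonneg)
        finally show ?thesis .
      qed
      have "(\<Sum>m\<in>B. nrm (\<lambda>j. q i m * P m j) S) \<le> of_nat (card B) * (Kq * e2)"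
        by (rule sum_bounded_above) (use each in auto)
      also have "\<dots> \<le> real M * (Kq * e2)"
        using B(2) Kq e2 by (intro mult_right_mono) auto
      also have "\<dots> = (real M * Kq) * (e / (2 * (real M * Kq + 1)))" unfolding e2_def by simp
      also have "\<dots> \<le> e / 2" using frac_le[OF MK e] .
      finally show ?thesis using f1(2) by linarith
    qed
    ultimately show ?thesis unfolding split S_def[symmetric] by linarith
  qed
  show "\<exists>N>0. \<forall>i. nrm (\<lambda>j. \<Sum>\<^sub>\<infinity>k. q i k * P k j) (UNIV - ball_qd d N i) \<le> e"
    using main N1(1) N2(1) by (intro exI[of _ "N1 + N2"]) auto
qed


lemma nrm_Cdelta: "bounded_op C \<Longrightarrow> nrm (C (delta i)) UNIV \<le> op_norm C"
  using bo_opnorm(2)[OF _ delta_ell2, of C i] by (simp add: nrm_delta)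

lemma part_add:
  assumes A: "A \<in> nonexp_ops d" and B: "B \<in> nonexp_ops d"
  shows "op_add A B \<in> nonexp_ops d"
proof -
  have bA: "bounded_op A" and rA: "RN d (\<lambda>i. A (delta i))" and cA: "RN d (\<lambda>i j. A (delta j) i)"
    using A unfolding nonexp_ops_def nonexpansive_RN by auto
  have bB: "bounded_op B" and rB: "RN d (\<lambda>i. B (delta i))" and cB: "RN d (\<lambda>i j. B (delta j) i)"
    using B unfolding nonexp_ops_def nonexpansive_RN by auto
  have r: "RN d (\<lambda>i. op_add A B (delta i))"
    using RN_add[OF _ _ rA rB] bo_ell2[OF bA delta_ell2] bo_ell2[OF bB delta_ell2]
    unfolding op_add_def by blast
  have c: "RN d (\<lambda>i j. op_add A B (delta j) i)"
    using RN_add[OF _ _ cA cB] col_bound[OF bA] col_bound[OF bB]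
    unfolding op_add_def by blast
  show ?thesis unfolding nonexp_ops_def nonexpansive_RN using bounded_op_add[OF bA bB] r c by blast
qed

lemma part_scale:
  assumes A: "A \<in> nonexp_ops d"
  shows "op_scale c A \<in> nonexp_ops d"
proof -
  have bA: "bounded_op A" and rA: "RN d (\<lambda>i. A (delta i))" and cA: "RN d (\<lambda>i j. A (delta j) i)"
    using A unfolding nonexp_ops_def nonexpansive_RN by auto
  have r: "RN d (\<lambda>i. op_scale c A (delta i))"
    using RN_scale[OF rA, of c] unfolding op_scale_def by blast
  have cc: "RN d (\<lambda>i j. op_scale c A (delta j) i)"
    using RN_scale[OF cA, of c] unfolding op_scale_def by blast
  show ?thesis unfolding nonexp_ops_def nonexpansive_RN using bounded_op_scale[OF bA] r cc by blast
qed

lemma part_mult: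
  fixes d :: "'i \<Rightarrow> 'i \<Rightarrow> real"
  assumes qd: "quasi_distance d"
    and card: "\<forall>R>0. \<exists>M::nat. \<forall>i. finite (ball_qd d R i) \<and> card (ball_qd d R i) \<le> M"
    and A: "A \<in> nonexp_ops d" and B: "B \<in> nonexp_ops d"
  shows "op_mult A B \<in> nonexp_ops d"
proof -
  have bA: "bounded_op A" and rA: "RN d (\<lambda>i. A (delta i))" and cA: "RN d (\<lambda>i j. A (delta j) i)"
    using A unfolding nonexp_ops_def nonexpansive_RN by auto
  have bB: "bounded_op B" and rB: "RN d (\<lambda>i. B (delta i))" and cB: "RN d (\<lambda>i j. B (delta j) i)"
    using B unfolding nonexp_ops_def nonexpansive_RN by auto
  have e1: "(\<lambda>i. op_mult A B (delta i)) = (\<lambda>i j. \<Sum>\<^sub>\<infinity>k. B (delta i) k * A (delta k) j)"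
    unfolding op_mult_def using repr[OF bA bo_ell2[OF bB delta_ell2]] by (intro ext) blast
  have r: "RN d (\<lambda>i. op_mult A B (delta i))"
    unfolding e1
  proof (rule RN_prod[OF qd card, where Kp = "op_norm A" and Kq = "op_norm B"])
    show "\<forall>k. A (delta k) \<in> ell2" using bo_ell2[OF bA delta_ell2] by blast
    show "RN d (\<lambda>k. A (delta k))" by (rule rA)
    show "\<forall>j. (\<lambda>k. A (delta k) j) \<in> ell2" using col_bound[OF bA] by blast
    show "0 \<le> op_norm A" by (rule bo_opnorm(1)[OF bA])
    show "\<forall>r\<in>ell2. (\<lambda>j. \<Sum>\<^sub>\<infinity>k. r k * A (delta k) j) \<in> ell2 \<and>
        nrm (\<lambda>j. \<Sum>\<^sub>\<infinity>k. r k * A (delta k) j) UNIV \<le> op_norm A * nrm r UNIV"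
    proof
      fix r :: "'i \<Rightarrow> complex" assume r: "r \<in> ell2"
      have eq: "(\<lambda>j. \<Sum>\<^sub>\<infinity>k. r k * A (delta k) j) = A r"
        using repr[OF bA r] by (intro ext) simp
      show "(\<lambda>j. \<Sum>\<^sub>\<infinity>k. r k * A (delta k) j) \<in> ell2 \<and>
        nrm (\<lambda>j. \<Sum>\<^sub>\<infinity>k. r k * A (delta k) j) UNIV \<le> op_norm A * nrm r UNIV"
        unfolding eq using bo_ell2[OF bA r] bo_opnorm(2)[OF bA r] by blast
    qed
    show "\<forall>i. B (delta i) \<in> ell2" using bo_ell2[OF bB delta_ell2] by blast
    show "RN d (\<lambda>i. B (delta i))" by (rule rB)
    show "\<forall>i. nrm (B (delta i)) UNIV \<le> op_norm B" using nrm_Cdelta[OF bB] by blast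
  qed
  have e2: "(\<lambda>i j. op_mult A B (delta j) i) = (\<lambda>i j. \<Sum>\<^sub>\<infinity>k. A (delta k) i * B (delta j) k)"
    unfolding op_mult_def using repr[OF bA bo_ell2[OF bB delta_ell2]] by (intro ext) (simp add: mult.commute)
  have c: "RN d (\<lambda>i j. op_mult A B (delta j) i)"
    unfolding e2
  proof (rule RN_prod[OF qd card, where Kp = "op_norm B" and Kq = "op_norm A"])
    show "\<forall>k. (\<lambda>j. B (delta j) k) \<in> ell2" using col_bound[OF bB] by blast
    show "RN d (\<lambda>k j. B (delta j) k)" by (rule cB)
    show "\<forall>j. (\<lambda>k. B (delta j) k) \<in> ell2" using bo_ell2[OF bB delta_ell2] by simp
    show "0 \<le> op_norm B" by (rule bo_opnorm(1)[OF bB])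
    show "\<forall>r\<in>ell2. (\<lambda>j. \<Sum>\<^sub>\<infinity>k. r k * B (delta j) k) \<in> ell2 \<and>
        nrm (\<lambda>j. \<Sum>\<^sub>\<infinity>k. r k * B (delta j) k) UNIV \<le> op_norm B * nrm r UNIV"
    proof
      fix r :: "'i \<Rightarrow> complex" assume r: "r \<in> ell2"
      have eq: "(\<lambda>j. \<Sum>\<^sub>\<infinity>k. r k * B (delta j) k) = (\<lambda>j. \<Sum>\<^sub>\<infinity>k. B (delta j) k * r k)"
        by (simp add: mult.commute)
      show "(\<lambda>j. \<Sum>\<^sub>\<infinity>k. r k * B (delta j) k) \<in> ell2 \<and>
        nrm (\<lambda>j. \<Sum>\<^sub>\<infinity>k. r k * B (delta j) k) UNIV \<le> op_norm B * nrm r UNIV"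
        unfolding eq by (rule adj_bound[OF bB r])
    qed
    show "\<forall>i. (\<lambda>k. A (delta k) i) \<in> ell2" using col_bound[OF bA] by blast
    show "RN d (\<lambda>i k. A (delta k) i)" by (rule cA)
    show "\<forall>i. nrm (\<lambda>k. A (delta k) i) UNIV \<le> op_norm A" using col_bound[OF bA] by blast
  qed
  show ?thesis unfolding nonexp_ops_def nonexpansive_RN using bounded_op_mult[OF bA bB] r c by blast
qed

lemma part_limit:
  fixes J :: "'j filter" and As :: "'j \<Rightarrow> 'i op"
  assumes J: "J \<noteq> bot" and As: "\<forall>j. As j \<in> nonexp_ops d" and bA: "bounded_op A"
    and lim: "\<forall>\<epsilon>>0. eventually (\<lambda>j. op_norm (op_diff A (As j)) < \<epsilon>) J"
  shows "A \<in> nonexp_ops d"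
proof -
  have ex: "\<exists>j. op_norm (op_diff A (As j)) < e" if "e > 0" for e
    using eventually_happens'[OF J lim[rule_format, OF that]] .
  have bAs: "bounded_op (As j)" for j using As unfolding nonexp_ops_def by blast
  have r: "RN d (\<lambda>i. A (delta i))"
  proof (rule RN_approx)
    show "\<forall>i. A (delta i) \<in> ell2" using bo_ell2[OF bA delta_ell2] by blast
    show "\<forall>\<epsilon>>0. \<exists>w. RN d w \<and> (\<forall>i. w i \<in> ell2) \<and> (\<forall>i. nrm (\<lambda>l. A (delta i) l - w i l) UNIV \<le> \<epsilon>)"
    proof (intro allI impI)
      fix e :: real assume e: "e > 0"
      obtain j where j: "op_norm (op_diff A (As j)) < e" using ex[OF e] by blast
      have D: "bounded_op (op_diff A (As j))" by (rule bounded_op_diff[OF bA bAs])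
      have "nrm (\<lambda>l. A (delta i) l - As j (delta i) l) UNIV \<le> e" for i
        using nrm_Cdelta[OF D, of i] j unfolding op_diff_def by simp
      moreover have "RN d (\<lambda>i. As j (delta i))"
        using As unfolding nonexp_ops_def nonexpansive_RN by blast
      moreover have "\<forall>i. As j (delta i) \<in> ell2" using bo_ell2[OF bAs delta_ell2] by blast
      ultimately show "\<exists>w. RN d w \<and> (\<forall>i. w i \<in> ell2) \<and> (\<forall>i. nrm (\<lambda>l. A (delta i) l - w i l) UNIV \<le> e)"
        by (intro exI[of _ "\<lambda>i. As j (delta i)"]) simp
    qed
  qed
  have c: "RN d (\<lambda>i l. A (delta l) i)"
  proof (rule RN_approx)
    show "\<forall>i. (\<lambda>l. A (delta l) i) \<in> ell2" using col_bound[OF bA] by blast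
    show "\<forall>\<epsilon>>0. \<exists>w. RN d w \<and> (\<forall>i. w i \<in> ell2) \<and> (\<forall>i. nrm (\<lambda>l. A (delta l) i - w i l) UNIV \<le> \<epsilon>)"
    proof (intro allI impI)
      fix e :: real assume e: "e > 0"
      obtain j where j: "op_norm (op_diff A (As j)) < e" using ex[OF e] by blast
      have D: "bounded_op (op_diff A (As j))" by (rule bounded_op_diff[OF bA bAs])
      have "nrm (\<lambda>l. A (delta l) i - As j (delta l) i) UNIV \<le> e" for i
        using col_bound[OF D, of i] j unfolding op_diff_def by simp
      moreover have "RN d (\<lambda>i l. As j (delta l) i)"
        using As unfolding nonexp_ops_def nonexpansive_RN by blast
      moreover have "\<forall>i. (\<lambda>l. As j (delta l) i) \<in> ell2" using col_bound[OF bAs] by blast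
      ultimately show "\<exists>w. RN d w \<and> (\<forall>i. w i \<in> ell2) \<and> (\<forall>i. nrm (\<lambda>l. A (delta l) i - w i l) UNIV \<le> e)"
        by (intro exI[of _ "\<lambda>i l. As j (delta l) i"]) simp
    qed
  qed
  show ?thesis unfolding nonexp_ops_def nonexpansive_RN using bA r c by blast
qed

lemma part_adj:
  assumes A: "A \<in> nonexp_ops d" and adj: "is_adjoint A B"
  shows "B \<in> nonexp_ops d"
proof -
  have bA: "bounded_op A" and rA: "RN d (\<lambda>i. A (delta i))" and cA: "RN d (\<lambda>i j. A (delta j) i)"
    using A unfolding nonexp_ops_def nonexpansive_RN by auto
  have bB: "bounded_op B" using adj unfolding is_adjoint_def by (elim conjE)
  have ent: "B (delta i) j = cnj (A (delta j) i)" for i j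
  proof -
    have H: "\<forall>x\<in>ell2. \<forall>y\<in>ell2. ell2_inner (A x) y = ell2_inner x (B y)"
      using adj unfolding is_adjoint_def by (elim conjE)
    have "ell2_inner (A (delta j)) (delta i) = ell2_inner (delta j) (B (delta i))"
      by (rule H[rule_format, OF delta_ell2 delta_ell2])
    then have "A (delta j) i = cnj (B (delta i) j)" by (simp add: inner_delta_left inner_delta_right)
    then show ?thesis by simp
  qed
  have r: "RN d (\<lambda>i. B (delta i))"
  proof -
    have "(\<lambda>i. B (delta i)) = (\<lambda>i j. cnj (A (delta j) i))" using ent by (intro ext) simp
    then show ?thesis using cA RN_cnj[of d "\<lambda>i j. A (delta j) i"] by simp
  qed
  have c: "RN d (\<lambda>i j. B (delta j) i)"
  proof -
    have "(\<lambda>i j. B (delta j) i) = (\<lambda>i j. cnj (A (delta i) j))" using ent by (intro ext) simp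
    then show ?thesis using rA RN_cnj[of d "\<lambda>i. A (delta i)"] by simp
  qed
  show ?thesis unfolding nonexp_ops_def nonexpansive_RN using bB r c by blast
qed

theorem theorem7p7:
  fixes d :: "'i::countable \<Rightarrow> 'i \<Rightarrow> real"
  assumes "quasi_distance d"
    and "\<forall>R>0. \<exists>M::nat. \<forall>i. finite (ball_qd d R i) \<and> card (ball_qd d R i) \<le> M"
  shows "(\<forall>A\<in>nonexp_ops d. \<forall>B\<in>nonexp_ops d. \<forall>c.
            op_add A B \<in> nonexp_ops d \<and> op_scale c A \<in> nonexp_ops d)
     \<and> (\<forall>A\<in>nonexp_ops d. \<forall>B\<in>nonexp_ops d. op_mult A B \<in> nonexp_ops d)
     \<and> (\<forall>(J :: 'j filter) (As :: 'j \<Rightarrow> 'i op) A.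
           J \<noteq> bot \<longrightarrow> (\<forall>j. As j \<in> nonexp_ops d) \<longrightarrow> bounded_op A \<longrightarrow>
           (\<forall>\<epsilon>>0. eventually (\<lambda>j. op_norm (op_diff A (As j)) < \<epsilon>) J) \<longrightarrow>
           A \<in> nonexp_ops d)
     \<and> (\<forall>A B. A \<in> nonexp_ops d \<longrightarrow> is_adjoint A B \<longrightarrow> B \<in> nonexp_ops d)"
proof (intro conjI)
  show "\<forall>A\<in>nonexp_ops d. \<forall>B\<in>nonexp_ops d. \<forall>c. op_add A B \<in> nonexp_ops d \<and> op_scale c A \<in> nonexp_ops d"
  proof (intro ballI allI conjI)
    fix A B c assume a: "A \<in> nonexp_ops d" and b: "B \<in> nonexp_ops d"
    show "op_add A B \<in> nonexp_ops d" using a b by (rule part_add)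
    show "op_scale c A \<in> nonexp_ops d" using a by (rule part_scale)
  qed
  show "\<forall>A\<in>nonexp_ops d. \<forall>B\<in>nonexp_ops d. op_mult A B \<in> nonexp_ops d"
  proof (intro ballI)
    fix A B assume "A \<in> nonexp_ops d" "B \<in> nonexp_ops d"
    then show "op_mult A B \<in> nonexp_ops d" by (rule part_mult[OF assms])
  qed
  show "\<forall>(J :: 'j filter) (As :: 'j \<Rightarrow> 'i op) A.
           J \<noteq> bot \<longrightarrow> (\<forall>j. As j \<in> nonexp_ops d) \<longrightarrow> bounded_op A \<longrightarrow>
           (\<forall>\<epsilon>>0. eventually (\<lambda>j. op_norm (op_diff A (As j)) < \<epsilon>) J) \<longrightarrow>
           A \<in> nonexp_ops d"
  proof (intro allI impI)
    fix J :: "'j filter" and As :: "'j \<Rightarrow> 'i op" and A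
    assume "J \<noteq> bot" "\<forall>j. As j \<in> nonexp_ops d" "bounded_op A"
      "\<forall>\<epsilon>>0. eventually (\<lambda>j. op_norm (op_diff A (As j)) < \<epsilon>) J"
    then show "A \<in> nonexp_ops d" by (rule part_limit)
  qed
  show "\<forall>A B. A \<in> nonexp_ops d \<longrightarrow> is_adjoint A B \<longrightarrow> B \<in> nonexp_ops d"
  proof (intro allI impI)
    fix A B assume "A \<in> nonexp_ops d" "is_adjoint A B"
    then show "B \<in> nonexp_ops d" by (rule part_adj)
  qed
qed

end
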